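(* Let $\Sigma$ be a signature such that $\Sigma(n)$ is finite for every $n$. Then: (i) the Hopf algebra $\mathbf N(T(\Sigma))$ is commutative if and only if either $\Sigma=\emptyset$, or $\Sigma$ consists of exactly one element and this element has arity $0$; (ii) $\mathbf N(T(\Sigma))$ is cocommutative if and only if either all elements of $\Sigma$ have arity $0$ (i.e. $\Sigma=\Sigma(0)$), or $\Sigma$ consists of exactly one element and this element has arity $1$.
   Context: $\mathbb K$ is a field of characteristic zero and $\mathbb N=\{0,1,2,\dots\}$. A signature is a set $\Sigma$ with an arity map $|\cdot|:\Sigma\to\mathbb N$; $\Sigma(n)$ denotes the set of elements of arity $n$. A $\Sigma$-term is either the leaf $\bot$ or an expression $s(t_1,\dots,t_n)$ with $n\in\mathbb N$, $s\in\Sigma(n)$ and $t_1,\dots,t_n$ $\Sigma$-terms (a planar rooted tree whose internal nodes with $n$ children are decorated by elements of $\Sigma(n)$). The degree of a term is its number of internal nodes and its arity $|t|$ its number of leaves. $T(\Sigma)$ denotes the set of $\Sigma$-terms, viewed as the free nonsymmetric operad on $\Sigma$: $t[t_1,\dots,t_{|t|}]$ is obtained by grafting the root of each $t_i$ onto the $i$-th leaf of $t$ (leaves numbered from left to right), and the unit is $\bot$. A $\Sigma$-forest is a finite word of $\Sigma$-terms; it is reduced if none of its terms is $\bot$. For a word $w$ of terms, $\mathrm{rd}(w)$ is the subword of its terms different from $\bot$. The natural Hopf algebra $\mathbf N(T(\Sigma))$ is the $\mathbb K$-vector space with basis $\{E_f\}$ indexed by reduced $\Sigma$-forests $f$, with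 product $E_{f_1}E_{f_2}=E_{f_1f_2}$ (concatenation, unit $E_\epsilon$), and coproduct the unique algebra morphism such that for every term $t\neq\bot$, $\Delta E_t=\sum E_{\mathrm{rd}(t')}\otimes E_{\mathrm{rd}(t_1\cdots t_{|t'|})}$, the sum ranging over all $t',t_1,\dots,t_{|t'|}\in T(\Sigma)$ with $t=t'[t_1,\dots,t_{|t'|}]$ (with $E_{\mathrm{rd}(\bot)}=E_\epsilon$). *)

theory Defs
  imports Main "HOL-Library.Poly_Mapping"
begin

text \<open>A signature is a set S of symbols of type 'a together with an arity map
  ar. Terms: Leaf is the leaf (bottom); Node s ts is s(t1,...,tn).\<close>

datatype 'a tm = Leaf | Node 'a "'a tm list"

fun wf_tm :: "'a set \<Rightarrow> ('a \<Rightarrow> nat) \<Rightarrow> 'a tm \<Rightarrow> bool" where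
  "wf_tm S ar Leaf = True"
| "wf_tm S ar (Node s ts) = (s \<in> S \<and> length ts = ar s \<and> (\<forall>u\<in>set ts. wf_tm S ar u))"

fun leaves :: "'a tm \<Rightarrow> nat" where
  "leaves Leaf = 1"
| "leaves (Node s ts) = sum_list (map leaves ts)"

text \<open>Grafting: graft t us grafts the first leaves of t onto the first elements of us
  (leaves numbered left to right), returning the result and the unused rest of us.\<close>
fun graft :: "'a tm \<Rightarrow> 'a tm list \<Rightarrow> 'a tm \<times> 'a tm list"
and graftl :: "'a tm list \<Rightarrow> 'a tm list \<Rightarrow> 'a tm list \<times> 'a tm list" where
  "graft Leaf [] = (Leaf, [])"
| "graft Leaf (u # us) = (u, us)"
| "graft (Node s cs) us = (let (cs', r) = graftl cs us in (Node s cs', r))"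
| "graftl [] us = ([], us)"
| "graftl (c # cs) us = (let (c', r) = graft c us; (cs', r') = graftl cs r in (c' # cs', r'))"

text \<open>Operadic composition t[t1,...,t_|t|] (meaningful when length us = leaves t).\<close>
definition comp :: "'a tm \<Rightarrow> 'a tm list \<Rightarrow> 'a tm" where
  "comp t us = fst (graft t us)"

definition decomps :: "'a tm \<Rightarrow> ('a tm \<times> 'a tm list) set" where
  "decomps t = {(t', us). length us = leaves t' \<and> comp t' us = t}"

definition rd :: "'a tm list \<Rightarrow> 'a tm list" where
  "rd w = filter (\<lambda>u. u \<noteq> Leaf) w"

definition reduced_forest :: "'a set \<Rightarrow> ('a \<Rightarrow> nat) \<Rightarrow> 'a tm list \<Rightarrow> bool" where
  "reduced_forest S ar f = (\<forall>u\<in>set f. wf_tm S ar u \<and> u \<noteq> Leaf)"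

text \<open>An element of N(T(Sigma)) is a finitely supported K-linear combination of
  basis vectors E_f, f a reduced Sigma-forest; an element of the tensor square is a
  finitely supported combination of E_f (x) E_g, represented on pairs (f,g).\<close>

definition NT :: "'a set \<Rightarrow> ('a \<Rightarrow> nat) \<Rightarrow> ('a tm list \<Rightarrow>\<^sub>0 'k::field_char_0) set" where
  "NT S ar = {x. \<forall>f\<in>Poly_Mapping.keys x. reduced_forest S ar f}"

definition nmult :: "('a tm list \<Rightarrow>\<^sub>0 'k::field_char_0) \<Rightarrow> ('a tm list \<Rightarrow>\<^sub>0 'k) \<Rightarrow> ('a tm list \<Rightarrow>\<^sub>0 'k)" where
  "nmult x y = (\<Sum>f\<in>Poly_Mapping.keys x. \<Sum>g\<in>Poly_Mapping.keys y.
       Poly_Mapping.single (f @ g) (Poly_Mapping.lookup x f * Poly_Mapping.lookup y g))"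

definition tmult :: "('a tm list \<times> 'a tm list \<Rightarrow>\<^sub>0 'k::field_char_0) \<Rightarrow> ('a tm list \<times> 'a tm list \<Rightarrow>\<^sub>0 'k)
     \<Rightarrow> ('a tm list \<times> 'a tm list \<Rightarrow>\<^sub>0 'k)" where
  "tmult p q = (\<Sum>a\<in>Poly_Mapping.keys p. \<Sum>b\<in>Poly_Mapping.keys q.
       Poly_Mapping.single (fst a @ fst b, snd a @ snd b) (Poly_Mapping.lookup p a * Poly_Mapping.lookup q b))"

text \<open>Coproduct of a single term t (t \<noteq> Leaf):
  sum over t = t'[t1..tk] of E_rd(t') (x) E_rd(t1...tk), with E_rd(Leaf) = E_epsilon.\<close>
definition cop_tm :: "'a tm \<Rightarrow> ('a tm list \<times> 'a tm list \<Rightarrow>\<^sub>0 'k::field_char_0)" where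
  "cop_tm t = (\<Sum>d\<in>decomps t. Poly_Mapping.single (rd [fst d], rd (snd d)) 1)"

fun cop_forest :: "'a tm list \<Rightarrow> ('a tm list \<times> 'a tm list \<Rightarrow>\<^sub>0 'k::field_char_0)" where
  "cop_forest [] = Poly_Mapping.single ([], []) 1"
| "cop_forest (t # f) = tmult (cop_tm t) (cop_forest f)"

definition ncoprod :: "('a tm list \<Rightarrow>\<^sub>0 'k::field_char_0) \<Rightarrow> ('a tm list \<times> 'a tm list \<Rightarrow>\<^sub>0 'k)" where
  "ncoprod x = (\<Sum>f\<in>Poly_Mapping.keys x. \<Sum>p\<in>Poly_Mapping.keys (cop_forest f :: ('a tm list \<times> 'a tm list \<Rightarrow>\<^sub>0 'k)).
       Poly_Mapping.single p (Poly_Mapping.lookup x f * Poly_Mapping.lookup (cop_forest f) p))"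

definition tflip :: "('a tm list \<times> 'a tm list \<Rightarrow>\<^sub>0 'k::field_char_0) \<Rightarrow> ('a tm list \<times> 'a tm list \<Rightarrow>\<^sub>0 'k)" where
  "tflip p = (\<Sum>a\<in>Poly_Mapping.keys p. Poly_Mapping.single (snd a, fst a) (Poly_Mapping.lookup p a))"

definition NT_commutative :: "'k::field_char_0 itself \<Rightarrow> 'a set \<Rightarrow> ('a \<Rightarrow> nat) \<Rightarrow> bool" where
  "NT_commutative _ S ar = (\<forall>x\<in>(NT S ar :: ('a tm list \<Rightarrow>\<^sub>0 'k) set). \<forall>y\<in>NT S ar. nmult x y = nmult y x)"

definition NT_cocommutative :: "'k::field_char_0 itself \<Rightarrow> 'a set \<Rightarrow> ('a \<Rightarrow> nat) \<Rightarrow> bool" where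
  "NT_cocommutative _ S ar = (\<forall>x\<in>(NT S ar :: ('a tm list \<Rightarrow>\<^sub>0 'k) set). tflip (ncoprod x) = ncoprod x)"

end

theory Submission
  imports Defs
begin


fun subs :: "'a tm \<Rightarrow> 'a tm set" where
  "subs Leaf = {Leaf}"
| "subs (Node s ts) = insert (Node s ts) (\<Union>u\<in>set ts. subs u)"

fun pref :: "'a tm \<Rightarrow> 'a tm set" where
  "pref Leaf = {Leaf}"
| "pref (Node s ts) = insert Leaf (Node s ` {cs. list_all2 (\<in>) cs (map pref ts)})"

lemma subs_self: "u \<in> subs u" by (cases u) auto

lemma finite_subs: "finite (subs t)"
  by (induction t) auto

lemma finite_la2: "\<forall>X\<in>set Xs. finite X \<Longrightarrow> finite {xs. list_all2 (\<in>) xs Xs}"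
proof (induction Xs)
  case Nil then show ?case by simp
next
  case (Cons X Xs)
  have "{xs. list_all2 (\<in>) xs (X # Xs)} = (\<lambda>(x, xs). x # xs) ` (X \<times> {xs. list_all2 (\<in>) xs Xs})"
    by (auto simp: list_all2_Cons2 image_iff)
  then show ?case using Cons by simp
qed

lemma finite_pref: "finite (pref t)"
proof (induction t)
  case (Node s ts)
  have "finite {cs. list_all2 (\<in>) cs (map pref ts)}" by (rule finite_la2) (use Node in auto)
  then show ?case by simp
qed simp

lemma Leaf_pref: "Leaf \<in> pref t" by (cases t) auto

lemma graft_props:
  "graft t vs = (r, rest) \<Longrightarrow> set (take (leaves t) vs) \<subseteq> subs r \<and> rest = drop (leaves t) vs \<and> t \<in> pref r"
  "graftl cs vs = (rs, rest) \<Longrightarrow> set (take (sum_list (map leaves cs)) vs) \<subseteq> (\<Union>u\<in>set rs. subs u)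
      \<and> rest = drop (sum_list (map leaves cs)) vs \<and> list_all2 (\<lambda>c r. c \<in> pref r) cs rs"
proof (induction t vs and cs vs arbitrary: r rest and rs rest rule: graft_graftl.induct)
  case 1 then show ?case by (auto simp: Leaf_pref)
next
  case (2 u us) then show ?case by (auto simp: Leaf_pref subs_self)
next
  case (3 s cs us)
  obtain cs' r' where g: "graftl cs us = (cs', r')" by fastforce
  with 3 show ?case by (fastforce simp: list_all2_map2)
next
  case (4 us) then show ?case by auto
next
  case (5 c cs us)
  obtain c' r1 where g1: "graft c us = (c', r1)" by fastforce
  obtain cs' r' where g2: "graftl cs r1 = (cs', r')" by fastforce
  from "5.prems" g1 g2 have e: "rs = c' # cs'" "rest = r'" by auto
  have i1: "set (take (leaves c) us) \<subseteq> subs c' \<and> r1 = drop (leaves c) us \<and> c \<in> pref c'"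
    using "5.IH"(1) g1 by blast
  have i2: "set (take (sum_list (map leaves cs)) r1) \<subseteq> (\<Union>u\<in>set cs'. subs u)
      \<and> r' = drop (sum_list (map leaves cs)) r1 \<and> list_all2 (\<lambda>c r. c \<in> pref r) cs cs'"
    using "5.IH"(2)[OF g1[symmetric] refl] g2 by blast
  show ?case using i1 i2 e
    by (auto simp: take_add add.commute dest: in_set_takeD)
qed

lemma graftl_len: "length (fst (graftl cs vs)) = length cs"
proof -
  obtain rs rest where "graftl cs vs = (rs, rest)" by fastforce
  from graft_props(2)[OF this] this show ?thesis by (auto dest: list_all2_lengthD)
qed

lemma comp_Node: "comp (Node r cs) us = Node r (fst (graftl cs us))"
  by (simp add: comp_def split: prod.split)

lemma finite_decomps: "finite (decomps t)"
proof -
  define K where "K = Max (leaves ` pref t)"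
  have "decomps t \<subseteq> pref t \<times> {us. set us \<subseteq> subs t \<and> length us \<le> K}"
  proof
    fix d assume "d \<in> decomps t"
    then obtain t' us where d: "d = (t', us)" "length us = leaves t'" "comp t' us = t"
      by (auto simp: decomps_def)
    obtain rest where g: "graft t' us = (t, rest)" using d by (cases "graft t' us") (auto simp: comp_def)
    from graft_props(1)[OF g] d have "t' \<in> pref t" "set us \<subseteq> subs t" by auto
    moreover have "leaves t' \<le> K" unfolding K_def using \<open>t' \<in> pref t\<close> finite_pref[of t] by (intro Max_ge) auto
    ultimately show "d \<in> pref t \<times> {us. set us \<subseteq> subs t \<and> length us \<le> K}" using d by auto
  qed
  moreover have "finite {us. set us \<subseteq> subs t \<and> length us \<le> K}"
    by (rule finite_lists_length_le[OF finite_subs])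
  ultimately show ?thesis using finite_pref by (meson finite_SigmaI rev_finite_subset)
qed



lemma sum_keys_when:
  fixes p :: "'b \<Rightarrow>\<^sub>0 'k::comm_ring_1"
  shows "(\<Sum>a\<in>Poly_Mapping.keys p. (c * Poly_Mapping.lookup p a when a = q)) = c * Poly_Mapping.lookup p q"
proof (cases "q \<in> Poly_Mapping.keys p")
  case True
  then show ?thesis by (simp add: sum.delta' when_def)
next
  case False
  then have "(\<Sum>a\<in>Poly_Mapping.keys p. (c * Poly_Mapping.lookup p a when a = q)) = 0"
    by (intro sum.neutral) (auto simp: when_def)
  with False show ?thesis by (simp add: in_keys_iff)
qed

lemma lookup_tflip: "Poly_Mapping.lookup (tflip p) (a, b) = Poly_Mapping.lookup p (b, a)"
proof -
  have "Poly_Mapping.lookup (tflip p) (a, b) = (\<Sum>k\<in>Poly_Mapping.keys p. (1 * Poly_Mapping.lookup p k when k = (b, a)))"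
    unfolding tflip_def lookup_sum lookup_single
    by (intro sum.cong) (auto simp: when_def)
  then show ?thesis by (simp only: sum_keys_when) simp
qed

lemma lookup_ncoprod:
  fixes x :: "'a tm list \<Rightarrow>\<^sub>0 'k::field_char_0"
  shows "Poly_Mapping.lookup (ncoprod x) q =
   (\<Sum>f\<in>Poly_Mapping.keys x. Poly_Mapping.lookup x f * Poly_Mapping.lookup (cop_forest f :: _ \<Rightarrow>\<^sub>0 'k) q)"
  unfolding ncoprod_def lookup_sum lookup_single
  by (intro sum.cong refl sum_keys_when)

lemma lookup_tmult: "Poly_Mapping.lookup (tmult p q) k =
  (\<Sum>a\<in>Poly_Mapping.keys p. \<Sum>b\<in>Poly_Mapping.keys q.
     (Poly_Mapping.lookup p a * Poly_Mapping.lookup q b when (fst a @ fst b, snd a @ snd b) = k))"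
  by (simp add: tmult_def lookup_sum lookup_single)

lemma lookup_cop_tm: "Poly_Mapping.lookup (cop_tm t :: _ \<Rightarrow>\<^sub>0 'k::field_char_0) q =
   (\<Sum>d\<in>decomps t. ((1::'k) when (rd [fst d], rd (snd d)) = q))"
  by (simp add: cop_tm_def lookup_sum lookup_single)

definition symm :: "('a tm list \<times> 'a tm list \<Rightarrow>\<^sub>0 'k::field_char_0) \<Rightarrow> bool" where
  "symm p \<longleftrightarrow> (\<forall>a b. Poly_Mapping.lookup p (a, b) = Poly_Mapping.lookup p (b, a))"

lemma symm_keys: assumes "symm p" shows "bij_betw prod.swap (Poly_Mapping.keys p) (Poly_Mapping.keys p)"
proof -
  have "prod.swap ` Poly_Mapping.keys p = Poly_Mapping.keys p"
  proof
    show "prod.swap ` Poly_Mapping.keys p \<subseteq> Poly_Mapping.keys p"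
      using assms unfolding symm_def by (auto simp: in_keys_iff)
    show "Poly_Mapping.keys p \<subseteq> prod.swap ` Poly_Mapping.keys p"
    proof
      fix k assume k: "k \<in> Poly_Mapping.keys p"
      obtain a b where kk: "k = (a, b)" by fastforce
      have "(b, a) \<in> Poly_Mapping.keys p" using assms k kk unfolding symm_def by (auto simp: in_keys_iff)
      then show "k \<in> prod.swap ` Poly_Mapping.keys p" using kk by (auto intro: image_eqI[of _ _ "(b,a)"])
    qed
  qed
  then show ?thesis by (simp add: bij_betw_def)
qed

lemma sum_swap_reindex:
  assumes "symm p"
  shows "(\<Sum>a\<in>Poly_Mapping.keys p. F a) = (\<Sum>a\<in>Poly_Mapping.keys p. F (prod.swap a))"
  using sum.reindex_bij_betw[OF symm_keys[OF assms], of F] by simp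

lemma symm_tmult:
  assumes "symm p" "symm q"
  shows "symm (tmult p q)"
  unfolding symm_def
proof (intro allI)
  fix a b
  let ?F = "\<lambda>x y. (Poly_Mapping.lookup p x * Poly_Mapping.lookup q y when (fst x @ fst y, snd x @ snd y) = (b, a))"
  have "Poly_Mapping.lookup (tmult p q) (b, a) = (\<Sum>x\<in>Poly_Mapping.keys p. \<Sum>y\<in>Poly_Mapping.keys q. ?F x y)"
    by (rule lookup_tmult)
  also have "\<dots> = (\<Sum>x\<in>Poly_Mapping.keys p. \<Sum>y\<in>Poly_Mapping.keys q. ?F x (prod.swap y))"
    by (intro sum.cong refl sum_swap_reindex[OF assms(2)])
  also have "\<dots> = (\<Sum>x\<in>Poly_Mapping.keys p. \<Sum>y\<in>Poly_Mapping.keys q. ?F (prod.swap x) (prod.swap y))"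
    by (rule sum_swap_reindex[OF assms(1)])
  also have "\<dots> = Poly_Mapping.lookup (tmult p q) (a, b)"
    unfolding lookup_tmult using assms unfolding symm_def
    by (intro sum.cong refl) (auto simp: when_def prod.swap_def)
  finally show "Poly_Mapping.lookup (tmult p q) (a, b) = Poly_Mapping.lookup (tmult p q) (b, a)" by simp
qed

lemma tmult_unit: "tmult p (Poly_Mapping.single ([], []) 1) = p"
proof (rule poly_mapping_eqI)
  fix k
  show "Poly_Mapping.lookup (tmult p (Poly_Mapping.single ([], []) 1)) k = Poly_Mapping.lookup p k"
    unfolding lookup_tmult
    by (simp add: sum_keys_when[of 1, simplified])
qed

lemma symm_tflip: "symm p \<Longrightarrow> tflip p = p"
  by (rule poly_mapping_eqI) (auto simp: lookup_tflip symm_def)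

lemma lookup_nmult: "Poly_Mapping.lookup (nmult x y) k =
  (\<Sum>f\<in>Poly_Mapping.keys x. \<Sum>g\<in>Poly_Mapping.keys y.
     (Poly_Mapping.lookup x f * Poly_Mapping.lookup y g when f @ g = k))"
  by (simp add: nmult_def lookup_sum lookup_single)



lemma forest_rep: "\<forall>u. wf_tm S ar u \<and> u \<noteq> Leaf \<longrightarrow> u = t0 \<Longrightarrow> reduced_forest S ar f \<Longrightarrow> f = replicate (length f) t0"
  unfolding reduced_forest_def by (metis replicate_length_same)

lemma comm_ok:
  assumes "\<forall>u. wf_tm S ar u \<and> u \<noteq> Leaf \<longrightarrow> u = t0"
  shows "NT_commutative TYPE('k::field_char_0) S ar"
  unfolding NT_commutative_def
proof (intro ballI poly_mapping_eqI)
  fix x y :: "'a tm list \<Rightarrow>\<^sub>0 'k" and k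
  assume x: "x \<in> NT S ar" and y: "y \<in> NT S ar"
  have ap: "f @ g = g @ f" if "f \<in> Poly_Mapping.keys x" "g \<in> Poly_Mapping.keys y" for f g
  proof -
    have "f = replicate (length f) t0" "g = replicate (length g) t0"
      using forest_rep[OF assms] x y that unfolding NT_def by auto
    then show ?thesis by (metis add.commute replicate_add)
  qed
  have "Poly_Mapping.lookup (nmult x y) k = (\<Sum>g\<in>Poly_Mapping.keys y. \<Sum>f\<in>Poly_Mapping.keys x.
     (Poly_Mapping.lookup x f * Poly_Mapping.lookup y g when f @ g = k))"
    unfolding lookup_nmult by (rule sum.swap)
  also have "\<dots> = Poly_Mapping.lookup (nmult y x) k"
    unfolding lookup_nmult using ap by (intro sum.cong refl) (auto simp: when_def mult.commute)
  finally show "Poly_Mapping.lookup (nmult x y) k = Poly_Mapping.lookup (nmult y x) k" .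
qed

lemma single_NT: "wf_tm S ar t \<Longrightarrow> t \<noteq> Leaf \<Longrightarrow> Poly_Mapping.single [t] (1::'k::field_char_0) \<in> NT S ar"
  by (simp add: NT_def reduced_forest_def)

lemma comm_bad:
  assumes "wf_tm S ar t1" "t1 \<noteq> Leaf" "wf_tm S ar t2" "t2 \<noteq> Leaf" "t1 \<noteq> t2"
  shows "\<not> NT_commutative TYPE('k::field_char_0) S ar"
proof
  assume "NT_commutative TYPE('k) S ar"
  then have "nmult (Poly_Mapping.single [t1] (1::'k)) (Poly_Mapping.single [t2] 1) =
             nmult (Poly_Mapping.single [t2] 1) (Poly_Mapping.single [t1] 1)"
    unfolding NT_commutative_def using single_NT assms by blast
  then have "Poly_Mapping.lookup (nmult (Poly_Mapping.single [t1] (1::'k)) (Poly_Mapping.single [t2] 1)) [t1, t2] =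
             Poly_Mapping.lookup (nmult (Poly_Mapping.single [t2] 1) (Poly_Mapping.single [t1] (1::'k))) [t1, t2]" by simp
  then show False using assms(5) by (simp add: lookup_nmult when_def)
qed

lemma symm_cop_forest:
  assumes "\<forall>t. wf_tm S ar t \<and> t \<noteq> Leaf \<longrightarrow> symm (cop_tm t :: _ \<Rightarrow>\<^sub>0 'k::field_char_0)"
  shows "reduced_forest S ar f \<Longrightarrow> symm (cop_forest f :: _ \<Rightarrow>\<^sub>0 'k)"
proof (induction f)
  case Nil then show ?case by (simp add: symm_def lookup_single when_def)
next
  case (Cons t f)
  then show ?case using assms by (auto simp: reduced_forest_def intro!: symm_tmult)
qed

lemma cocomm_ok:
  assumes "\<forall>t. wf_tm S ar t \<and> t \<noteq> Leaf \<longrightarrow> symm (cop_tm t :: _ \<Rightarrow>\<^sub>0 'k::field_char_0)"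
  shows "NT_cocommutative TYPE('k) S ar"
  unfolding NT_cocommutative_def
proof
  fix x :: "'a tm list \<Rightarrow>\<^sub>0 'k" assume x: "x \<in> NT S ar"
  have "symm (ncoprod x)"
    unfolding symm_def lookup_ncoprod
  proof (intro allI sum.cong refl)
    fix a b f assume "f \<in> Poly_Mapping.keys x"
    then have "symm (cop_forest f :: _ \<Rightarrow>\<^sub>0 'k)" using symm_cop_forest[OF assms] x by (auto simp: NT_def)
    then show "Poly_Mapping.lookup x f * Poly_Mapping.lookup (cop_forest f :: _ \<Rightarrow>\<^sub>0 'k) (a, b) =
               Poly_Mapping.lookup x f * Poly_Mapping.lookup (cop_forest f :: _ \<Rightarrow>\<^sub>0 'k) (b, a)"
      by (simp add: symm_def)
  qed
  then show "tflip (ncoprod x) = ncoprod x" by (rule symm_tflip)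
qed

lemma lookup_cop_tm_card:
  "Poly_Mapping.lookup (cop_tm t :: _ \<Rightarrow>\<^sub>0 'k::field_char_0) q =
   of_nat (card {d \<in> decomps t. (rd [fst d], rd (snd d)) = q})"
proof -
  have "Poly_Mapping.lookup (cop_tm t :: _ \<Rightarrow>\<^sub>0 'k) q = (\<Sum>d\<in>decomps t. if (rd [fst d], rd (snd d)) = q then 1 else 0)"
    by (simp add: lookup_cop_tm when_def)
  also have "\<dots> = (\<Sum>d\<in>{d \<in> decomps t. (rd [fst d], rd (snd d)) = q}. 1)"
    by (rule sum.inter_filter[OF finite_decomps, symmetric])
  finally show ?thesis by simp
qed

lemma ncoprod_single:
  "Poly_Mapping.lookup (ncoprod (Poly_Mapping.single [t] (1::'k::field_char_0))) q = Poly_Mapping.lookup (cop_tm t :: _ \<Rightarrow>\<^sub>0 'k) q"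
proof -
  have "cop_forest [t] = (cop_tm t :: _ \<Rightarrow>\<^sub>0 'k)" by (simp only: cop_forest.simps tmult_unit)
  then show ?thesis unfolding lookup_ncoprod by simp
qed

lemma cocomm_bad:
  assumes "wf_tm S ar t" "t \<noteq> Leaf" "d0 \<in> decomps t" "(rd [fst d0], rd (snd d0)) = (f, g)"
    "\<forall>d\<in>decomps t. (rd [fst d], rd (snd d)) \<noteq> (g, f)"
  shows "\<not> NT_cocommutative TYPE('k::field_char_0) S ar"
proof
  assume "NT_cocommutative TYPE('k) S ar"
  then have "tflip (ncoprod (Poly_Mapping.single [t] (1::'k))) = ncoprod (Poly_Mapping.single [t] 1)"
    unfolding NT_cocommutative_def using single_NT assms by blast
  then have "Poly_Mapping.lookup (tflip (ncoprod (Poly_Mapping.single [t] (1::'k)))) (g, f) =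
     Poly_Mapping.lookup (ncoprod (Poly_Mapping.single [t] (1::'k))) (g, f)" by simp
  then have e: "Poly_Mapping.lookup (cop_tm t :: _ \<Rightarrow>\<^sub>0 'k) (f, g) = Poly_Mapping.lookup (cop_tm t :: _ \<Rightarrow>\<^sub>0 'k) (g, f)"
    by (simp only: lookup_tflip ncoprod_single)
  have "{d \<in> decomps t. (rd [fst d], rd (snd d)) = (g, f)} = {}" using assms(5) by auto
  moreover have "card {d \<in> decomps t. (rd [fst d], rd (snd d)) = (f, g)} \<noteq> 0"
  proof -
    have "d0 \<in> {d \<in> decomps t. (rd [fst d], rd (snd d)) = (f, g)}" using assms(3,4) by simp
    moreover have "finite {d \<in> decomps t. (rd [fst d], rd (snd d)) = (f, g)}" using finite_decomps[of t] by simp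
    ultimately show ?thesis by (metis (no_types, lifting) card_eq_0_iff equals0D)
  qed
  moreover have "(of_nat (card {d \<in> decomps t. (rd [fst d], rd (snd d)) = (f, g)}) :: 'k) =
     of_nat (card {d \<in> decomps t. (rd [fst d], rd (snd d)) = (g, f)})"
    using e unfolding lookup_cop_tm_card .
  ultimately show False by (simp only: card.empty of_nat_0 of_nat_eq_0_iff)
qed



lemma graftl_rep: "length us = k \<Longrightarrow> graftl (replicate k Leaf) us = (us, [])"
proof (induction k arbitrary: us)
  case 0 then show ?case by simp
next
  case (Suc k) then show ?case by (cases us) auto
qed

lemma leaves_rep: "leaves (Node s (replicate n Leaf)) = n"
  by (induction n) auto

lemma comp_rep: "length us = n \<Longrightarrow> comp (Node s (replicate n Leaf)) us = Node s us"
  by (simp add: comp_Node graftl_rep)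

lemma comp_Leaf: "comp Leaf [u] = u" by (simp add: comp_def)

lemma rd_single: "length (rd [x]) \<le> 1" by (simp add: rd_def)

lemma decomps_Node_root:
  assumes "(Node r cs, us) \<in> decomps t" shows "\<exists>xs. t = Node r xs"
  using assms by (auto simp: decomps_def comp_Node)

lemma decomps_const: "decomps (Node s []) = {(Leaf, [Node s []]), (Node s [], [])}"
proof
  show "decomps (Node s []) \<subseteq> {(Leaf, [Node s []]), (Node s [], [])}"
  proof
    fix d assume d: "d \<in> decomps (Node s [])"
    then obtain t' us where tu: "d = (t', us)" "length us = leaves t'" "comp t' us = Node s []"
      by (auto simp: decomps_def)
    show "d \<in> {(Leaf, [Node s []]), (Node s [], [])}"
    proof (cases t')
      case Leaf
      then obtain u where "us = [u]" using tu by (cases us) auto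
      then show ?thesis using tu Leaf by (simp add: comp_Leaf)
    next
      case (Node r cs)
      then have "r = s" "fst (graftl cs us) = []" using tu by (auto simp: comp_Node)
      then have "cs = []" using graftl_len[of cs us] by simp
      then show ?thesis using tu Node \<open>r = s\<close> by simp
    qed
  qed
  show "{(Leaf, [Node s []]), (Node s [], [])} \<subseteq> decomps (Node s [])"
    by (auto simp: decomps_def comp_Leaf comp_Node)
qed

lemma symm_const: "symm (cop_tm (Node s []) :: _ \<Rightarrow>\<^sub>0 'k::field_char_0)"
  unfolding symm_def lookup_cop_tm decomps_const
  by (auto simp: rd_def when_def)

fun chu :: "'a \<Rightarrow> nat \<Rightarrow> 'a tm \<Rightarrow> 'a tm" where
  "chu s 0 u = u"
| "chu s (Suc k) u = Node s [chu s k u]"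

lemma graft_chu: "graft (chu s k Leaf) [u] = (chu s k u, [])"
  by (induction k) auto

lemma chu_chu: "chu s k (chu s j Leaf) = chu s (k + j) Leaf"
  by (induction k) auto

lemma leaves_chu: "leaves (chu s k Leaf) = 1"
  by (induction k) auto

lemma chu_inj: "chu s k Leaf = chu s j Leaf \<Longrightarrow> k = j"
proof (induction k arbitrary: j)
  case 0 then show ?case by (cases j) auto
next
  case (Suc k) then show ?case by (cases j) auto
qed

lemma decomps_chu: "decomps (chu s n Leaf) = (\<lambda>k. (chu s k Leaf, [chu s (n - k) Leaf])) ` {..n}"
proof
  show "(\<lambda>k. (chu s k Leaf, [chu s (n - k) Leaf])) ` {..n} \<subseteq> decomps (chu s n Leaf)"
    by (auto simp: decomps_def comp_def graft_chu leaves_chu chu_chu)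
  show "decomps (chu s n Leaf) \<subseteq> (\<lambda>k. (chu s k Leaf, [chu s (n - k) Leaf])) ` {..n}"
  proof
    fix d assume "d \<in> decomps (chu s n Leaf)"
    then obtain t' us where tu: "d = (t', us)" "length us = leaves t'" "comp t' us = chu s n Leaf"
      by (auto simp: decomps_def)
    have "\<exists>k\<le>n. t' = chu s k Leaf \<and> us = [chu s (n - k) Leaf]"
      using tu(2,3)
    proof (induction n arbitrary: t' us)
      case 0
      then show ?case
      proof (cases t')
        case Leaf
        then obtain u where "us = [u]" using 0 by (cases us) auto
        then show ?thesis using 0 Leaf by (simp add: comp_Leaf)
      next
        case (Node r cs) then show ?thesis using 0 by (simp add: comp_Node)
      qed
    next
      case (Suc m)
      show ?case
      proof (cases t')
        case Leaf
        then obtain u where "us = [u]" using Suc by (cases us) auto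
        then show ?thesis using Suc.prems Leaf by (auto simp: comp_Leaf intro!: exI[of _ 0])
      next
        case (Node r cs)
        then have r: "r = s" and g: "fst (graftl cs us) = [chu s m Leaf]" using Suc.prems by (auto simp: comp_Node)
        then obtain c where c: "cs = [c]" using graftl_len[of cs us] by (cases cs) auto
        then have "fst (graft c us) = chu s m Leaf" using g by (auto split: prod.splits)
        then have "comp c us = chu s m Leaf" by (simp add: comp_def)
        moreover have "length us = leaves c" using Suc.prems Node c by simp
        ultimately obtain k where "k \<le> m" "c = chu s k Leaf" "us = [chu s (m - k) Leaf]"
          using Suc.IH by blast
        then show ?thesis using Node r c by (auto intro!: exI[of _ "Suc k"])
      qed
    qed
    then show "d \<in> (\<lambda>k. (chu s k Leaf, [chu s (n - k) Leaf])) ` {..n}" using tu by auto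
  qed
qed

lemma symm_chu: "symm (cop_tm (chu s n Leaf) :: _ \<Rightarrow>\<^sub>0 'k::field_char_0)"
  unfolding symm_def
proof (intro allI)
  fix a b
  let ?F = "\<lambda>q k. ((1::'k) when (rd [chu s k Leaf], rd [chu s (n - k) Leaf]) = q)"
  have inj: "inj_on (\<lambda>k. (chu s k Leaf, [chu s (n - k) Leaf])) {..n}"
    by (auto simp: inj_on_def dest: chu_inj)
  have L: "Poly_Mapping.lookup (cop_tm (chu s n Leaf) :: _ \<Rightarrow>\<^sub>0 'k) q = (\<Sum>k\<le>n. ?F q k)" for q
    unfolding lookup_cop_tm decomps_chu sum.reindex[OF inj] by simp
  have "(\<Sum>k\<le>n. ?F (a, b) k) = (\<Sum>k\<le>n. ?F (a, b) (n - k))"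
    by (rule sum.reindex_bij_witness[where i="\<lambda>k. n - k" and j="\<lambda>k. n - k"]) auto
  also have "\<dots> = (\<Sum>k\<le>n. ?F (b, a) k)"
    by (intro sum.cong refl) (auto simp: when_def)
  finally show "Poly_Mapping.lookup (cop_tm (chu s n Leaf) :: _ \<Rightarrow>\<^sub>0 'k) (a, b) =
      Poly_Mapping.lookup (cop_tm (chu s n Leaf) :: _ \<Rightarrow>\<^sub>0 'k) (b, a)" by (simp only: L)
qed

lemma wf_chain: "S = {s} \<Longrightarrow> ar s = 1 \<Longrightarrow> wf_tm S ar t \<Longrightarrow> \<exists>n. t = chu s n Leaf"
proof (induction t)
  case Leaf then show ?case by (auto intro: exI[of _ 0])
next
  case (Node r ts)
  then obtain u where "ts = [u]" "r = s" by (cases ts) auto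
  with Node obtain n where "u = chu s n Leaf" by auto
  then show ?case using \<open>ts = [u]\<close> \<open>r = s\<close> by (auto intro: exI[of _ "Suc n"])
qed



lemma wf_rep: "s \<in> S \<Longrightarrow> wf_tm S ar (Node s (replicate (ar s) Leaf))" by simp

theorem proposition3p2:
  fixes S :: "'a set" and ar :: "'a \<Rightarrow> nat"
  assumes fin: "\<And>n. finite {s \<in> S. ar s = n}"
  shows "(NT_commutative TYPE('k::field_char_0) S ar \<longleftrightarrow>
            (S = {} \<or> (\<exists>s. S = {s} \<and> ar s = 0)))
       \<and> (NT_cocommutative TYPE('k::field_char_0) S ar \<longleftrightarrow>
            ((\<forall>s\<in>S. ar s = 0) \<or> (\<exists>s. S = {s} \<and> ar s = 1)))"
proof (intro conjI iffI)
  assume "S = {} \<or> (\<exists>s. S = {s} \<and> ar s = 0)"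
  then show "NT_commutative TYPE('k::field_char_0) S ar"
  proof
    assume "S = {}"
    then have "\<forall>u. wf_tm S ar u \<and> u \<noteq> Leaf \<longrightarrow> u = Leaf"
      by (intro allI, case_tac u) auto
    then show ?thesis by (rule comm_ok)
  next
    assume "\<exists>s. S = {s} \<and> ar s = 0"
    then obtain s where s: "S = {s}" "ar s = 0" by blast
    then have "\<forall>u. wf_tm S ar u \<and> u \<noteq> Leaf \<longrightarrow> u = Node s []"
      by (intro allI, case_tac u) auto
    then show ?thesis by (rule comm_ok)
  qed
next
  assume C: "NT_commutative TYPE('k::field_char_0) S ar"
  show "S = {} \<or> (\<exists>s. S = {s} \<and> ar s = 0)"
  proof (rule ccontr)
    assume N: "\<not> ?thesis"
    then obtain s where s: "s \<in> S" by blast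
    show False
    proof (cases "ar s = 0")
      case True
      then obtain s2 where s2: "s2 \<in> S" "s2 \<noteq> s" using N s by blast
      have "\<not> NT_commutative TYPE('k) S ar"
        by (rule comm_bad[of S ar "Node s []" "Node s2 (replicate (ar s2) Leaf)"]) (use s s2 True in auto)
      then show False using C by simp
    next
      case False
      define t1 where "t1 = Node s (replicate (ar s) Leaf)"
      have "\<not> NT_commutative TYPE('k) S ar"
        by (rule comm_bad[of S ar t1 "Node s (t1 # replicate (ar s - 1) Leaf)"])
           (use s False in \<open>auto simp: t1_def dest: arg_cong[where f="\<lambda>xs. hd xs"]\<close>)
      then show False using C by simp
    qed
  qed
next
  assume "(\<forall>s\<in>S. ar s = 0) \<or> (\<exists>s. S = {s} \<and> ar s = 1)"
  then show "NT_cocommutative TYPE('k::field_char_0) S ar"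
  proof
    assume A: "\<forall>s\<in>S. ar s = 0"
    show ?thesis
    proof (rule cocomm_ok, intro allI impI)
      fix t assume "wf_tm S ar t \<and> t \<noteq> Leaf"
      then obtain s where "t = Node s []" using A by (cases t) auto
      then show "symm (cop_tm t :: _ \<Rightarrow>\<^sub>0 'k)" by (simp add: symm_const)
    qed
  next
    assume "\<exists>s. S = {s} \<and> ar s = 1"
    then obtain s where s: "S = {s}" "ar s = 1" by blast
    show ?thesis
    proof (rule cocomm_ok, intro allI impI)
      fix t assume "wf_tm S ar t \<and> t \<noteq> Leaf"
      then obtain n where "t = chu s n Leaf" using wf_chain[of S s ar, OF s(1) s(2)] by blast
      then show "symm (cop_tm t :: _ \<Rightarrow>\<^sub>0 'k)" by (simp add: symm_chu)
    qed
  qed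
next
  assume C: "NT_cocommutative TYPE('k::field_char_0) S ar"
  show "(\<forall>s\<in>S. ar s = 0) \<or> (\<exists>s. S = {s} \<and> ar s = 1)"
  proof (rule ccontr)
    assume N: "\<not> ?thesis"
    then obtain s where s: "s \<in> S" "ar s \<noteq> 0" by blast
    show False
    proof (cases "ar s = 1")
      case True
      then obtain s2 where s2: "s2 \<in> S" "s2 \<noteq> s" using N s by blast
      define c where "c = Node s2 (replicate (ar s2) Leaf)"
      define t where "t = Node s [c]"
      have d0: "(Node s [Leaf], [c]) \<in> decomps t"
        using comp_rep[of "[c]" 1 s] by (simp add: decomps_def t_def)
      have "\<not> NT_cocommutative TYPE('k) S ar"
      proof (rule cocomm_bad[OF _ _ d0])
        show "wf_tm S ar t" using s s2 True by (simp add: t_def c_def)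
        show "t \<noteq> Leaf" by (simp add: t_def)
        show "(rd [fst (Node s [Leaf], [c])], rd (snd (Node s [Leaf], [c]))) = ([Node s [Leaf]], [c])"
          by (simp add: rd_def c_def)
        show "\<forall>d\<in>decomps t. (rd [fst d], rd (snd d)) \<noteq> ([c], [Node s [Leaf]])"
        proof
          fix d assume d: "d \<in> decomps t"
          show "(rd [fst d], rd (snd d)) \<noteq> ([c], [Node s [Leaf]])"
          proof
            assume "(rd [fst d], rd (snd d)) = ([c], [Node s [Leaf]])"
            then have "fst d = c" by (simp add: rd_def split: if_splits)
            then have "(Node s2 (replicate (ar s2) Leaf), snd d) \<in> decomps t" using d
              unfolding c_def by (cases d) simp
            from decomps_Node_root[OF this] show False using s2 by (simp add: t_def)
          qed
        qed
      qed
      then show False using C by simp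
    next
      case False
      then have n2: "ar s \<ge> 2" using s by simp
      define c where "c = Node s (replicate (ar s) Leaf)"
      define t where "t = Node s (c # c # replicate (ar s - 2) Leaf)"
      define us where "us = c # c # replicate (ar s - 2) Leaf"
      have lus: "length us = ar s" using n2 by (simp add: us_def)
      have d0: "(c, us) \<in> decomps t"
        using comp_rep[OF lus, of s] leaves_rep[of s "ar s"] lus
        by (simp add: decomps_def t_def c_def us_def)
      have "\<not> NT_cocommutative TYPE('k) S ar"
      proof (rule cocomm_bad[OF _ _ d0])
        show "wf_tm S ar t" using s n2 by (simp add: t_def c_def)
        show "t \<noteq> Leaf" by (simp add: t_def)
        show "(rd [fst (c, us)], rd (snd (c, us))) = ([c], [c, c])"
          by (simp add: rd_def c_def us_def)
        show "\<forall>d\<in>decomps t. (rd [fst d], rd (snd d)) \<noteq> ([c, c], [c])"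
        proof
          fix d assume "d \<in> decomps t"
          have "length (rd [fst d]) \<le> 1" by (rule rd_single)
          then show "(rd [fst d], rd (snd d)) \<noteq> ([c, c], [c])" by auto
        qed
      qed
      then show False using C by simp
    qed
  qed
qed

end
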